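(* Let $n\ge 2$. Then there exists a non-convex domain $D\subset\mathbb{C}^n$ such that $A(D)$ is pseudoconvex for every real isometry $A$ of $\mathbb{C}^n=\mathbb{R}^{2n}$. *)

theory Defs
  imports "HOL-Analysis.Analysis"
begin

text \<open>Complex n-space is modelled as \<open>complex ^ 'n\<close>; its norm is the Euclidean
norm of \<open>\<real>\<^sup>2\<^sup>n\<close>.\<close>

definition domain :: "'a::topological_space set \<Rightarrow> bool" where
  "domain D \<longleftrightarrow> open D \<and> connected D \<and> D \<noteq> {}"

text \<open>Continuous plurisubharmonic function on an open set D: continuous and
subharmonic (sub-mean-value property) on every complex line, i.e. for every closed
analytic disc a + \<zeta> b, |\<zeta>| \<le> 1, contained in D.\<close>
definition cont_psh :: "(complex ^ 'n) set \<Rightarrow> (complex ^ 'n \<Rightarrow> real) \<Rightarrow> bool" where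
  "cont_psh D u \<longleftrightarrow> continuous_on D u \<and>
     (\<forall>a b. (\<forall>\<zeta>::complex. norm \<zeta> \<le> 1 \<longrightarrow> a + \<zeta> *s b \<in> D) \<longrightarrow>
        u a \<le> (1 / (2 * pi)) * integral {0..2*pi} (\<lambda>t. u (a + cis t *s b)))"

text \<open>Pseudoconvexity (Hartogs/Oka): D is open and admits a continuous
plurisubharmonic exhaustion function.\<close>
definition pseudoconvex :: "(complex ^ 'n) set \<Rightarrow> bool" where
  "pseudoconvex D \<longleftrightarrow> open D \<and>
     (\<exists>\<phi>. cont_psh D \<phi> \<and> (\<forall>c::real. compact {z \<in> D. \<phi> z \<le> c}))"

end

theory Submission
  imports Defs
begin


definition qf :: "'a::real_inner \<Rightarrow> 'a \<Rightarrow> real" where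
  "qf e x = (norm x)^2 - 2*(inner x e)^2"

definition gg :: "real \<Rightarrow> real" where "gg x = 1/(1-x)"

definition phi :: "'a::real_inner \<Rightarrow> 'a \<Rightarrow> real" where
  "phi e x = (norm x)^2 + gg (qf e x)"

lemma nsq_add: "(norm (x + y::'a::real_inner))^2 = (norm x)^2 + (norm y)^2 + 2 * inner x y"
  by (simp add: power2_norm_eq_inner inner_add_left inner_add_right inner_commute)

lemma nsq_diff: "(norm (x - y::'a::real_inner))^2 = (norm x)^2 + (norm y)^2 - 2 * inner x y"
  by (simp add: power2_norm_eq_inner inner_diff_left inner_diff_right inner_commute)

lemma qf_pm: "qf e (p+w) + qf e (p-w) = 2*qf e p + 2*((norm w)^2 - 2*(inner w e)^2)"
  unfolding qf_def nsq_add nsq_diff by (simp add: inner_add_left inner_diff_left power2_eq_square algebra_simps)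

lemma bessel2:
  fixes w0 w1 e :: "'a::real_inner"
  assumes "inner w0 w1 = 0" "norm w0 = r" "norm w1 = r" "norm e = 1"
  shows "(inner w0 e)^2 + (inner w1 e)^2 \<le> r^2"
proof -
  define s where "s = inner w0 e"
  define t where "t = inner w1 e"
  define y where "y = s *\<^sub>R w0 + t *\<^sub>R w1"
  have ye: "inner y e = s^2 + t^2" unfolding y_def s_def t_def
    by (simp add: inner_add_left power2_eq_square)
  have yy: "(norm y)^2 = (s^2+t^2) * r^2" unfolding y_def nsq_add
    using assms(1-3) by (simp add: power_mult_distrib inner_commute algebra_simps)
  have cs: "(inner y e)^2 \<le> (norm y)^2 * (norm e)^2"
  proof -
    have "\<bar>inner y e\<bar> \<le> norm y * norm e" by (rule Cauchy_Schwarz_ineq2)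
    then have "\<bar>inner y e\<bar>^2 \<le> (norm y * norm e)^2" using power_mono abs_ge_zero by blast
    then show ?thesis by (simp add: power_mult_distrib)
  qed
  have "(s^2+t^2)^2 \<le> (s^2+t^2) * r^2" using cs ye yy assms(4) by simp
  then have "s^2+t^2 \<le> r^2"
    by (smt (verit) mult_le_cancel_left power2_eq_square zero_le_power2)
  then show ?thesis by (simp add: s_def t_def)
qed

lemma g_conv:
  fixes a b :: real assumes "a < 1" "b < 1"
  shows "2 * gg ((a+b)/2) \<le> gg a + gg b"
proof -
  define \<alpha> where "\<alpha> = 1 - a"
  define \<beta> where "\<beta> = 1 - b"
  have p: "\<alpha> > 0" "\<beta> > 0" using assms by (auto simp: \<alpha>_def \<beta>_def)
  have e1: "1 - (a+b)/2 = (\<alpha>+\<beta>)/2" by (simp add: \<alpha>_def \<beta>_def field_simps)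
  have e2: "2/(1 - (a+b)/2) = 4/(\<alpha>+\<beta>)" unfolding e1 by simp
  have ineq: "4/(\<alpha>+\<beta>) \<le> 1/\<alpha> + 1/\<beta>"
  proof -
    have "0 \<le> (\<alpha>-\<beta>)^2" by simp
    then have "4*\<alpha>*\<beta> \<le> (\<alpha>+\<beta>)*(\<alpha>+\<beta>)" by (simp add: power2_eq_square algebra_simps)
    then show ?thesis using p by (simp add: field_simps)
  qed
  have "2/(1 - (a+b)/2) \<le> 1/\<alpha> + 1/\<beta>" using e2 ineq by simp
  then show ?thesis by (simp add: \<alpha>_def \<beta>_def gg_def)
qed

lemma g_mono: fixes x y :: real shows "x \<le> y \<Longrightarrow> y < 1 \<Longrightarrow> gg x \<le> gg y"
  unfolding gg_def by (simp add: frac_le)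

lemma arith_aux:
  fixes X0 X1 Q N N1 S T :: real
  shows "X0 = 2*Q + 2*(N - 2*S) \<Longrightarrow> X1 = 2*Q + 2*(N1 - 2*T) \<Longrightarrow> S + T \<le> N \<Longrightarrow> N = N1 \<Longrightarrow> Q \<le> (X0/2 + X1/2)/2"
  by (simp add: field_simps)

lemma lin5: fixes a b c d G0 G1 Gm Gp np na nb nc nd :: real shows
 "2*G0 \<le> a+b \<Longrightarrow> 2*G1 \<le> c+d \<Longrightarrow> 2*Gm \<le> G0+G1 \<Longrightarrow> Gp \<le> Gm \<Longrightarrow> 4*np \<le> na+nb+nc+nd \<Longrightarrow>
  4*(np+Gp) \<le> (na + a) + (nb + b) + (nc + c) + (nd + d)" by argo

lemma point_ineq:
  fixes p w0 w1 e :: "'a::real_inner"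
  assumes "norm e = 1" "inner w0 w1 = 0" "norm w0 = norm w1"
    "qf e (p+w0) < 1" "qf e (p-w0) < 1" "qf e (p+w1) < 1" "qf e (p-w1) < 1"
  shows "4 * phi e p \<le> phi e (p+w0) + phi e (p-w0) + phi e (p+w1) + phi e (p-w1)"
proof -
  define m0 where "m0 = (qf e (p+w0) + qf e (p-w0))/2"
  define m1 where "m1 = (qf e (p+w1) + qf e (p-w1))/2"
  have b: "(inner w0 e)^2 + (inner w1 e)^2 \<le> (norm w0)^2"
    using bessel2[OF assms(2) refl assms(3)[symmetric] assms(1)] .
  have sq: "(norm w0)^2 = (norm w1)^2" using assms(3) by simp
  have m: "qf e p \<le> (m0+m1)/2" unfolding m0_def m1_def using qf_pm[of e p w0] qf_pm[of e p w1] b sq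
    by (intro arith_aux) auto
  have m01: "m0 < 1" "m1 < 1" using assms(4-7) by (auto simp: m0_def m1_def)
  have "2 * gg m0 \<le> gg (qf e (p+w0)) + gg (qf e (p-w0))"
    using g_conv[OF assms(4,5)] by (simp add: m0_def)
  moreover have "2 * gg m1 \<le> gg (qf e (p+w1)) + gg (qf e (p-w1))"
    using g_conv[OF assms(6,7)] by (simp add: m1_def)
  moreover have "2 * gg ((m0+m1)/2) \<le> gg m0 + gg m1" using g_conv[OF m01] .
  moreover have "gg (qf e p) \<le> gg ((m0+m1)/2)" using g_mono[OF m] m01 by simp
  moreover have "4*(norm p)^2 \<le> (norm (p+w0))^2 + (norm (p-w0))^2 + (norm (p+w1))^2 + (norm (p-w1))^2"
    unfolding nsq_add nsq_diff by simp
  ultimately show ?thesis unfolding phi_def by (rule lin5)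
qed

lemma iso_mid:
  fixes B :: "'a::real_normed_vector \<Rightarrow> 'b::real_inner"
  assumes iso: "\<forall>x\<in>S. \<forall>y\<in>S. dist (B x) (B y) = dist x y" and S: "a+v \<in> S" "a - v \<in> S" "a \<in> S"
  shows "B (a - v) = B a - (B (a + v) - B a)"
proof -
  define P where "P = B (a+v) - B a"
  define Q where "Q = B a - B (a - v)"
  have nP: "norm P = norm v" using iso S unfolding P_def dist_norm[symmetric] by (simp add: dist_norm)
  have nQ: "norm Q = norm v" using iso S unfolding Q_def dist_norm[symmetric] by (simp add: dist_norm)
  have "norm (P+Q) = dist (B (a+v)) (B (a-v))" by (simp add: P_def Q_def dist_norm)
  also have "\<dots> = norm (2 *\<^sub>R v)" using iso S by (simp add: dist_norm algebra_simps scaleR_2)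
  finally have nPQ: "norm (P+Q) = 2 * norm v" by simp
  have "(norm (P - Q))^2 = 0" using nsq_add[of P Q] nsq_diff[of P Q] nP nQ nPQ by (simp add: power_mult_distrib)
  then have "P = Q" by simp
  then show ?thesis by (simp add: P_def Q_def algebra_simps)
qed



lemma norm_smult_c: "norm (c *s (v::complex^'n)) = norm c * norm v"
  by (simp add: norm_vec_def L2_set_def norm_mult power_mult_distrib sum_distrib_left[symmetric] real_sqrt_mult)

lemma inner_ii: "inner v (\<i> *s (v::complex^'n)) = 0"
  by (simp add: inner_vec_def inner_complex_def)

lemma cis_smult: "cis t *s (b::complex^'n) = cos t *\<^sub>R b + sin t *\<^sub>R (\<i> *s b)"
  by (simp add: vec_eq_iff cis.code complex_eq_iff)

lemma cont_cis_smult: "continuous_on UNIV (\<lambda>t. a + cis t *s (b::complex^'n))"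
  unfolding cis_smult by (intro continuous_intros)

lemma int_ineq:
  fixes f :: "real \<Rightarrow> real"
  assumes cf: "continuous_on UNIV f"
    and pt: "\<And>t. 4 * cc \<le> f t + f (t + pi/2) + f (t + pi) + f (t + 3*pi/2)"
  shows "cc \<le> (1 / (2 * pi)) * integral {0..2*pi} f"
proof -
  define h where "h = pi/2"
  have h: "h > 0" by (simp add: h_def)
  have ii: "\<And>a b. f integrable_on {a..b}"
    by (rule integrable_continuous_interval) (rule continuous_on_subset[OF cf], simp)
  have sh: "\<And>k. integral {k*h..(k+1)*h} f = integral {0..h} (\<lambda>t. f (t + k*h))"
  proof -
    fix k :: real
    have "integral {0..h} (f \<circ> (+) (k*h)) = integral {0 + k*h..h + k*h} f"
      by (rule integral_shift_Icc_real)
    then show "integral {k*h..(k+1)*h} f = integral {0..h} (\<lambda>t. f (t + k*h))"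
      by (simp add: o_def add.commute algebra_simps)
  qed
  have "integral {0..2*pi} f = integral {0*h..1*h} f + integral {1*h..2*h} f + integral {2*h..3*h} f + integral {3*h..4*h} f"
  proof -
    have "integral {0*h..4*h} f = integral {0*h..1*h} f + integral {1*h..4*h} f"
      using Henstock_Kurzweil_Integration.integral_combine[where a="0*h" and c="1*h" and b="4*h" and f=f] h ii by simp
    moreover have "integral {1*h..4*h} f = integral {1*h..2*h} f + integral {2*h..4*h} f"
      using Henstock_Kurzweil_Integration.integral_combine[where a="1*h" and c="2*h" and b="4*h" and f=f] h ii by simp
    moreover have "integral {2*h..4*h} f = integral {2*h..3*h} f + integral {3*h..4*h} f"
      using Henstock_Kurzweil_Integration.integral_combine[where a="2*h" and c="3*h" and b="4*h" and f=f] h ii by simp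
    moreover have e4: "{0..2*pi} = {0*h..4*h}" by (simp add: h_def)
    ultimately show ?thesis unfolding e4 by argo
  qed
  also have "\<dots> = integral {0..h} (\<lambda>t. f (t + 0*h)) + integral {0..h} (\<lambda>t. f (t + 1*h))
     + integral {0..h} (\<lambda>t. f (t + 2*h)) + integral {0..h} (\<lambda>t. f (t + 3*h))"
    using sh[of 0] sh[of 1] sh[of 2] sh[of 3] by simp
  also have "\<dots> = integral {0..h} (\<lambda>t. f (t + 0*h) + f (t + 1*h) + f (t + 2*h) + f (t + 3*h))"
  proof -
    have ci: "\<And>k. (\<lambda>t. f (t + k*h)) integrable_on {0..h}"
      by (rule integrable_continuous_interval) (intro continuous_on_compose2[OF cf] continuous_intros, auto)
    have i3: "integral {0..h} (\<lambda>t. f (t + 0*h) + f (t + 1*h) + f (t + 2*h) + f (t + 3*h)) =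
       integral {0..h} (\<lambda>t. f (t + 0*h) + f (t + 1*h) + f (t + 2*h)) + integral {0..h} (\<lambda>t. f (t + 3*h))"
      by (rule integral_add) (intro integrable_add ci)+
    have i2: "integral {0..h} (\<lambda>t. f (t + 0*h) + f (t + 1*h) + f (t + 2*h)) =
       integral {0..h} (\<lambda>t. f (t + 0*h) + f (t + 1*h)) + integral {0..h} (\<lambda>t. f (t + 2*h))"
      by (rule integral_add) (intro integrable_add ci)+
    have i1: "integral {0..h} (\<lambda>t. f (t + 0*h) + f (t + 1*h)) =
       integral {0..h} (\<lambda>t. f (t + 0*h)) + integral {0..h} (\<lambda>t. f (t + 1*h))"
      by (rule integral_add) (intro integrable_add ci)+
    show ?thesis by (simp only: i1 i2 i3)
  qed
  also have "\<dots> \<ge> integral {0..h} (\<lambda>t. 4 * cc)"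
  proof (rule integral_le)
    show "(\<lambda>t. 4 * cc) integrable_on {0..h}" by (intro integrable_continuous_interval continuous_intros)
    show "(\<lambda>t. f (t + 0*h) + f (t + 1*h) + f (t + 2*h) + f (t + 3*h)) integrable_on {0..h}"
      by (rule integrable_continuous_interval) (intro continuous_on_compose2[OF cf] continuous_intros, auto)
    fix t show "4 * cc \<le> f (t + 0*h) + f (t + 1*h) + f (t + 2*h) + f (t + 3*h)"
      using pt[of t] by (simp add: h_def algebra_simps)
  qed
  finally have "integral {0..h} (\<lambda>t. 4 * cc) \<le> integral {0..2*pi} f" .
  then have "2*pi * cc \<le> integral {0..2*pi} f" using h by (simp add: h_def)
  then show ?thesis by (simp add: field_simps)
qed



lemma cis_q1: "cis (t + pi/2) = \<i> * cis t"
  by (simp add: complex_eq_iff cos_add sin_add)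
lemma cis_q2: "cis (t + pi) = - cis t"
  by (simp add: complex_eq_iff cos_add sin_add)
lemma cis_q3: "cis (t + 3*pi/2) = - (\<i> * cis t)"
proof -
  have "cis (t + 3*pi/2) = cis ((t + pi/2) + pi)" by (simp add: algebra_simps)
  then show ?thesis by (simp only: cis_q2 cis_q1)
qed

theorem proposition3p2:
  assumes "CARD('n::finite) \<ge> 2"
  shows "\<exists>D :: (complex ^ 'n) set. domain D \<and> \<not> convex D \<and>
           (\<forall>A :: complex ^ 'n \<Rightarrow> complex ^ 'n.
              (\<forall>x y. dist (A x) (A y) = dist x y) \<longrightarrow> pseudoconvex (A ` D))"
proof -
  obtain j :: 'n where True by blast
  define e :: "complex^'n" where "e = axis j 1"
  have ne: "norm e = 1" by (simp add: e_def norm_eq_sqrt_inner inner_axis_axis inner_complex_def)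
  define D where "D = {x. qf e x < 1}"
  have cq: "continuous_on UNIV (qf e)" unfolding qf_def by (intro continuous_intros)
  have openD: "open D" unfolding D_def
    by (rule open_Collect_less[OF cq]) (intro continuous_intros)
  have qs: "\<And>t x. qf e (t *\<^sub>R x) = t^2 * qf e x"
    by (simp add: qf_def power_mult_distrib algebra_simps)
  have "starlike D" unfolding starlike_def
  proof (intro bexI ballI subsetI)
    show "0 \<in> D" by (simp add: D_def qf_def)
    fix x y assume x: "x \<in> D" and y: "y \<in> closed_segment 0 x"
    then obtain t where t: "0 \<le> t" "t \<le> 1" "y = t *\<^sub>R x" by (auto simp: closed_segment_def)
    have t2: "t^2 \<le> 1" using t by (simp add: power_le_one)
    have "t^2 * qf e x < 1"
    proof (cases "qf e x \<le> 0")
      case True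
      have "t^2 * qf e x \<le> 0" using True by (simp add: mult_nonneg_nonpos)
      then show ?thesis by simp
    next
      case False
      then have "t^2 * qf e x \<le> qf e x" using t2 by (simp add: mult_le_cancel_right1)
      then show ?thesis using x by (simp add: D_def)
    qed
    then show "y \<in> D" using t qs by (simp add: D_def)
  qed
  then have connD: "connected D" by (rule starlike_imp_connected)
  have qax: "\<And>c. qf e (axis j c) = (cmod c)^2 - 2 * (Re c)^2"
    by (simp add: qf_def e_def norm_eq_sqrt_inner inner_axis_axis inner_complex_def cmod_power2)
  have ncvx: "\<not> convex D"
  proof
    assume cv: "convex D"
    have "axis j (Complex 2 2) \<in> D" "axis j (Complex (-2) 2) \<in> D"
      by (simp_all add: D_def qax cmod_power2)
    then have "(1/2) *\<^sub>R axis j (Complex 2 2) + (1/2) *\<^sub>R axis j (Complex (-2) 2) \<in> D"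
      using convexD[OF cv, of _ _ "1/2" "1/2"] by simp
    moreover have "(1/2) *\<^sub>R axis j (Complex 2 2) + (1/2) *\<^sub>R axis j (Complex (-2) 2) = axis j (Complex 0 2)"
      by (simp add: vec_eq_iff axis_def complex_eq_iff)
    ultimately have "axis j (Complex 0 2) \<in> D" by simp
    then show False by (simp add: D_def qax cmod_power2)
  qed
  have contphi: "continuous_on D (phi e)"
    unfolding phi_def qf_def D_def gg_def by (intro continuous_intros) auto
  have compK: "\<And>c. compact {x \<in> D. phi e x \<le> c}"
  proof -
    fix c
    have eq: "{x \<in> D. phi e x \<le> c} = {x. (norm x)^2 \<le> c} \<inter> {x. (norm x)^2 * (1 - qf e x) + 1 \<le> c * (1 - qf e x)}"
    proof (intro set_eqI iffI)
      fix x assume "x \<in> {x \<in> D. phi e x \<le> c}"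
      then have q: "qf e x < 1" and ph: "(norm x)^2 + 1/(1 - qf e x) \<le> c" by (auto simp: D_def phi_def gg_def)
      define d where "d = 1 - qf e x"
      have d: "d > 0" using q by (simp add: d_def)
      have "(norm x)^2 \<le> c" using ph d by (smt (verit) d_def divide_pos_pos zero_less_one)
      moreover have "((norm x)^2 + 1/d) * d \<le> c * d" using ph d unfolding d_def[symmetric]
        by (simp add: mult_right_mono)
      then have "(norm x)^2 * d + 1 \<le> c * d" using d by (simp add: algebra_simps)
      ultimately show "x \<in> {x. (norm x)^2 \<le> c} \<inter> {x. (norm x)^2 * (1 - qf e x) + 1 \<le> c * (1 - qf e x)}"
        by (simp add: d_def)
    next
      fix x assume "x \<in> {x. (norm x)^2 \<le> c} \<inter> {x. (norm x)^2 * (1 - qf e x) + 1 \<le> c * (1 - qf e x)}"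
      then have n: "(norm x)^2 \<le> c" and m: "(norm x)^2 * (1 - qf e x) + 1 \<le> c * (1 - qf e x)" by auto
      have q: "qf e x < 1"
      proof (rule ccontr)
        assume "\<not> qf e x < 1"
        then have "(c - (norm x)^2) * (1 - qf e x) \<le> 0" using n by (simp add: mult_nonneg_nonpos)
        then show False using m by (simp add: algebra_simps)
      qed
      define d where "d = 1 - qf e x"
      have d: "d > 0" using q by (simp add: d_def)
      have m': "(norm x)^2 * d + 1 \<le> c * d" using m by (simp add: d_def)
      have "(norm x)^2 + 1/d \<le> c"
      proof -
        have "((norm x)^2 + 1/d) * d \<le> c * d" using m' d by (simp add: algebra_simps)
        then show ?thesis using d by simp
      qed
      then show "x \<in> {x \<in> D. phi e x \<le> c}" using q by (simp add: D_def phi_def d_def gg_def)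
    qed
    have "closed ({x. (norm x)^2 \<le> c} \<inter> {x. (norm x)^2 * (1 - qf e x) + 1 \<le> c * (1 - qf e x)})"
      unfolding qf_def by (intro closed_Int closed_Collect_le continuous_intros)
    moreover have "bounded ({x::complex^'n. (norm x)^2 \<le> c} \<inter> {x. (norm x)^2 * (1 - qf e x) + 1 \<le> c * (1 - qf e x)})"
    proof -
      have "\<forall>x\<in>{x::complex^'n. (norm x)^2 \<le> c}. norm x \<le> 1 + c"
      proof
        fix x :: "complex^'n" assume "x \<in> {x. (norm x)^2 \<le> c}"
        then have n: "(norm x)^2 \<le> c" by simp
        have "0 \<le> (norm x - 1)^2" by simp
        then have "2 * norm x \<le> (norm x)^2 + 1" by (simp add: power2_eq_square algebra_simps)
        then show "norm x \<le> 1 + c" using n by (smt (verit) zero_le_power2)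
      qed
      then have "bounded {x::complex^'n. (norm x)^2 \<le> c}" unfolding bounded_iff by blast
      then show ?thesis by (rule bounded_subset) auto
    qed
    ultimately show "compact {x \<in> D. phi e x \<le> c}" unfolding eq by (simp add: compact_eq_bounded_closed)
  qed
  show ?thesis
  proof (intro exI conjI allI impI)
    show "domain D" unfolding domain_def using openD connD by (auto simp: D_def qf_def intro!: exI[of _ 0])
    show "\<not> convex D" by (rule ncvx)
    fix A :: "complex^'n \<Rightarrow> complex^'n"
    assume iso: "\<forall>x y. dist (A x) (A y) = dist x y"
    have injA: "inj A" unfolding inj_def using iso by (metis dist_eq_0_iff)
    define B where "B = inv A"
    have BA: "\<And>x. B (A x) = x" unfolding B_def using injA by simp
    have contA: "continuous_on UNIV A"
      unfolding continuous_on_iff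
    proof (intro ballI allI impI)
      fix x and \<epsilon>::real assume "0 < \<epsilon>"
      then show "\<exists>d>0. \<forall>x'\<in>UNIV. dist x' x < d \<longrightarrow> dist (A x') (A x) < \<epsilon>"
        using iso by (intro exI[of _ \<epsilon>]) auto
    qed
    have isoB: "\<forall>x\<in>range A. \<forall>y\<in>range A. dist (B x) (B y) = dist x y" using iso BA by auto
    have contB: "continuous_on (range A) B"
      unfolding continuous_on_iff
    proof (intro ballI allI impI)
      fix x and \<epsilon>::real assume "0 < \<epsilon>" "x \<in> range A"
      then show "\<exists>d>0. \<forall>x'\<in>range A. dist x' x < d \<longrightarrow> dist (B x') (B x) < \<epsilon>"
        using isoB by (intro exI[of _ \<epsilon>]) auto
    qed
    define u where "u = (\<lambda>w. phi e (B w))"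
    have BD: "\<And>w. w \<in> A ` D \<Longrightarrow> B w \<in> D" using BA by auto
    have contu: "continuous_on (A ` D) u" unfolding u_def
      by (rule continuous_on_compose2[OF contphi continuous_on_subset[OF contB]]) (use BD in auto)
    show "pseudoconvex (A ` D)"
      unfolding pseudoconvex_def
    proof (intro conjI exI)
      show "open (A ` D)"
      proof -
        define L where "L = (\<lambda>x. A x - A 0)"
        have linL: "linear L" unfolding L_def
          by (rule isometry_linear) (use iso in \<open>simp_all add: dist_norm\<close>)
        have "inj L" using injA unfolding L_def inj_def by auto
        then have sL: "surj L" using linear_inj_imp_surj[OF linL] by blast
        have "\<forall>y. \<exists>x. y = A x"
        proof
          fix y
          from sL obtain x where "L x = y - A 0" by (metis surjD)
          then show "\<exists>x. y = A x" by (auto simp: L_def)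
        qed
        then have sA: "surj A" unfolding surj_def .
        have eqAD: "A ` D = {w. qf e (B w) < 1}"
        proof (intro set_eqI iffI)
          fix w assume "w \<in> A ` D" then show "w \<in> {w. qf e (B w) < 1}" using BD by (auto simp: D_def)
        next
          fix w assume "w \<in> {w. qf e (B w) < 1}" then have "B w \<in> D" by (simp add: D_def)
          moreover have "A (B w) = w" unfolding B_def using sA by (simp add: surj_f_inv_f)
          ultimately show "w \<in> A ` D" by (metis image_eqI)
        qed
        have isoBU: "\<forall>x y. dist (B x) (B y) = dist x y" using isoB sA by simp
        have contBU: "continuous_on UNIV B"
          using contB sA by simp
        have "continuous_on UNIV (\<lambda>w. qf e (B w))"
          by (rule continuous_on_compose2[OF cq contBU]) auto
        then show ?thesis unfolding eqAD by (rule open_Collect_less) (rule continuous_on_const)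
      qed
      show "\<forall>c. compact {z \<in> A ` D. u z \<le> c}"
      proof
        fix c
        have "{z \<in> A ` D. u z \<le> c} = A ` {x \<in> D. phi e x \<le> c}" by (auto simp: u_def BA)
        then show "compact {z \<in> A ` D. u z \<le> c}"
          using compact_continuous_image[OF continuous_on_subset[OF contA] compK] by simp
      qed
      show "cont_psh (A ` D) u"
        unfolding cont_psh_def
      proof (intro conjI allI impI)
        show "continuous_on (A ` D) u" by (rule contu)
        fix a b assume disc: "\<forall>\<zeta>::complex. norm \<zeta> \<le> 1 \<longrightarrow> a + \<zeta> *s b \<in> A ` D"
        define f where "f = (\<lambda>t. u (a + cis t *s b))"
        have cf: "continuous_on UNIV f" unfolding f_def
          by (rule continuous_on_compose2[OF contu cont_cis_smult]) (use disc in auto)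
        show "u a \<le> 1 / (2 * pi) * integral {0..2 * pi} (\<lambda>t. u (a + cis t *s b))"
          unfolding f_def[symmetric]
        proof (rule int_ineq[OF cf])
          fix t
          define v where "v = cis t *s b"
          have m1: "a + v \<in> A ` D" using disc[rule_format, of "cis t"] by (simp add: v_def)
          have m2: "a - v \<in> A ` D" using disc[rule_format, of "- cis t"] by (simp add: v_def vector_smult_lneg)
          have m3: "a + \<i> *s v \<in> A ` D" using disc[rule_format, of "\<i> * cis t"]
            by (simp add: v_def vector_smult_assoc norm_mult)
          have m4: "a - \<i> *s v \<in> A ` D" using disc[rule_format, of "- (\<i> * cis t)"]
            by (simp add: v_def vector_smult_assoc vector_smult_lneg norm_mult)
          have m0: "a \<in> A ` D" using disc[rule_format, of 0] by simp
          have f0: "f t = u (a + v)" by (simp add: f_def v_def)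
          have f1: "f (t + pi/2) = u (a + \<i> *s v)" by (simp add: f_def v_def cis_q1 vector_smult_assoc)
          have f2: "f (t + pi) = u (a - v)" by (simp add: f_def v_def cis_q2 vector_smult_lneg)
          have f3: "f (t + 3*pi/2) = u (a - \<i> *s v)"
            by (simp add: f_def v_def cis_q3 vector_smult_lneg vector_smult_assoc)
          define p where "p = B a"
          define w0 where "w0 = B (a + v) - p"
          define w1 where "w1 = B (a + \<i> *s v) - p"
          have R: "a + v \<in> range A" "a - v \<in> range A" "a \<in> range A"
              "a + \<i> *s v \<in> range A" "a - \<i> *s v \<in> range A" using m0 m1 m2 m3 m4 by auto
          have b2: "B (a - v) = p - w0" using iso_mid[OF isoB R(1,2,3)] by (simp add: p_def w0_def)
          have b4: "B (a - \<i> *s v) = p - w1" using iso_mid[OF isoB R(4,5,3)] by (simp add: p_def w1_def)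
          have b1: "B (a + v) = p + w0" "B (a + \<i> *s v) = p + w1" by (simp_all add: w0_def w1_def)
          have nw0: "norm w0 = norm v"
          proof -
            have "norm w0 = dist (B (a+v)) (B a)" by (simp add: w0_def p_def dist_norm)
            also have "\<dots> = dist (a+v) a" using isoB R by blast
            finally show ?thesis by (simp add: dist_norm)
          qed
          have nw1: "norm w1 = norm v"
          proof -
            have "norm w1 = dist (B (a + \<i> *s v)) (B a)" by (simp add: w1_def p_def dist_norm)
            also have "\<dots> = dist (a + \<i> *s v) a" using isoB R by blast
            finally show ?thesis by (simp add: dist_norm norm_smult_c)
          qed
          have nd: "norm (w0 - w1) = norm (v - \<i> *s v)"
          proof -
            have "norm (w0 - w1) = dist (B (a + v)) (B (a + \<i> *s v))" by (simp add: w0_def w1_def dist_norm)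
            also have "\<dots> = dist (a + v) (a + \<i> *s v)" using isoB R by blast
            finally show ?thesis by (simp add: dist_norm)
          qed
          have "(norm (v - \<i> *s v))^2 = (norm v)^2 + (norm v)^2"
            using nsq_diff[of v "\<i> *s v"] by (simp add: inner_ii norm_smult_c)
          then have orth: "inner w0 w1 = 0" using nsq_diff[of w0 w1] nd nw0 nw1 by simp
          have qs: "qf e (p+w0) < 1" "qf e (p-w0) < 1" "qf e (p+w1) < 1" "qf e (p-w1) < 1"
            using BD[OF m1] BD[OF m2] BD[OF m3] BD[OF m4] b1 b2 b4 by (auto simp: D_def)
          have "4 * phi e p \<le> phi e (p+w0) + phi e (p-w0) + phi e (p+w1) + phi e (p-w1)"
            by (rule point_ineq[OF ne orth _ qs]) (simp add: nw0 nw1)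
          then show "4 * u a \<le> f t + f (t + pi/2) + f (t + pi) + f (t + 3*pi/2)"
            unfolding f0 f1 f2 f3 u_def b1 b2 b4 p_def[symmetric] by simp
        qed
      qed
    qed
  qed
qed


end
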